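(* In the standing setting below, assume $A$ has full column rank and that $(w_t,Q_t)_{t=1}^T$ is a quadrature rule on $\mathrm{SO}(d+1)$ with positive weights and degree of accuracy $n\ge K$. Let $P_A=\sum_j(\beta_{\mathrm{aug}})_j\varphi_j$, where $\beta_{\mathrm{aug}}$ minimises $L_{\mathrm{aug}}$. Then $P_A$ is exactly rotation invariant: $\varepsilon_{\mathrm{sym}}(P_A)=0$.
   Context: $S^{N,d}=(S^d)^N$ with $L^2$ taken w.r.t. the product of normalised uniform surface measures; $Q\in\mathrm{SO}(d+1)$ acts elementwise, $Q\cdot(\mathbf r_1,\dots,\mathbf r_N)=(Q\mathbf r_1,\dots,Q\mathbf r_N)$. $V^{N,d}_K$: restrictions to $S^{N,d}$ of complex polynomials of total degree $\le K$ in Cartesian coordinates; $B^{N,d}_K$: its rotation-invariant subspace. Fix an orthonormal basis $\varphi_1,\dots,\varphi_m$ of $V^{N,d}_K$ with $\varphi_1,\dots,\varphi_{m_{\mathrm I}}$ a basis of $B^{N,d}_K$ and the rest a basis of its orthogonal complement. Data: points $R_1,\dots,R_n\in S^{N,d}$, a rotation-invariant target $f$, $Y_i=f(R_i)$; design matrix $A_{ij}=\varphi_j(R_i)$; $(A\circ Q)_{ij}=\varphi_j(Q\cdot R_i)$. Augmentation parameters: weights $w_1,\dots,w_T$ with $\sum_tw_t=1$ and rotations $Q_1,\dots,Q_T$; the augmented loss is $L_{\mathrm{aug}}(\beta)=\frac12\sum_tw_t\|(A\circ Q_t)\beta-Y\|^2$. A quadrature rule $(w_t,Q_t)_{t=1}^T$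 on $\mathrm{SO}(d+1)$ has degree of accuracy $n$ if $\sum_tw_tp(Q_t)=\int_{\mathrm{SO}(d+1)}p\,dH$ for every polynomial $p$ of degree $\le n$ in the matrix entries of $Q$, where $H$ is the normalised Haar measure. $\varepsilon_{\mathrm{sym}}(g)=\|g-\mathrm{sym}(g)\|_{L^2}$ with $\mathrm{sym}$ the $L^2$-orthogonal projection onto rotation-invariant functions. *)

theory Defs
  imports "HOL-Probability.Probability"
begin

text \<open>Conventions. The ambient space R^(d+1) is real^'n (so CARD('n) = d+1),
the particle index set {1..N} is the finite type 'p. A configuration
(r_1,...,r_N) is a function 'p => real^'n.\<close>

type_synonym ('p,'n) config = "'p \<Rightarrow> real^'n"

definition SO :: "(real^'n^'n) set" where
  "SO = {Q. orthogonal_matrix Q \<and> det Q = 1}"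

definition config_sphere :: "('p::finite,'n::finite) config set" where
  "config_sphere = {R. \<forall>p. norm (R p) = 1}"

definition rot_act :: "real^'n^'n \<Rightarrow> ('p,'n::finite) config \<Rightarrow> ('p,'n) config" where
  "rot_act Q R = (\<lambda>p. Q *v R p)"

text \<open>Normalised uniform surface measure on S^d: radial projection of the
uniform probability measure on the unit ball (the cone measure).\<close>
definition sphere_measure :: "(real^'n::finite) measure" where
  "sphere_measure = distr (uniform_measure lborel (ball 0 1)) borel (\<lambda>x. x /\<^sub>R norm x)"

definition config_measure :: "('p::finite,'n::finite) config measure" where
  "config_measure = PiM UNIV (\<lambda>_. sphere_measure)"

definition cmono :: "('p::finite \<Rightarrow> 'n::finite \<Rightarrow> nat) \<Rightarrow> ('p,'n) config \<Rightarrow> complex" where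
  "cmono \<alpha> R = (\<Prod>p\<in>UNIV. \<Prod>i\<in>UNIV. complex_of_real ((R p $ i) ^ \<alpha> p i))"

definition cdeg :: "('p::finite \<Rightarrow> 'n::finite \<Rightarrow> nat) \<Rightarrow> nat" where
  "cdeg \<alpha> = (\<Sum>p\<in>UNIV. \<Sum>i\<in>UNIV. \<alpha> p i)"

text \<open>V^{N,d}_K: (functions agreeing on S^{N,d} with) complex polynomials
of total degree \<le> K.\<close>
definition polyV :: "nat \<Rightarrow> (('p::finite,'n::finite) config \<Rightarrow> complex) set" where
  "polyV K = {f. \<exists>E c. finite E \<and> (\<forall>\<alpha>\<in>E. cdeg \<alpha> \<le> K) \<and>
       (\<forall>R\<in>config_sphere. f R = (\<Sum>\<alpha>\<in>E. c \<alpha> * cmono \<alpha> R))}"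

definition rot_invariant :: "(('p::finite,'n::finite) config \<Rightarrow> complex) \<Rightarrow> bool" where
  "rot_invariant h \<longleftrightarrow> (\<forall>Q\<in>SO. \<forall>R\<in>config_sphere. h (rot_act Q R) = h R)"

definition polyB :: "nat \<Rightarrow> (('p::finite,'n::finite) config \<Rightarrow> complex) set" where
  "polyB K = {f \<in> polyV K. rot_invariant f}"

definition span_on :: "(nat \<Rightarrow> ('p::finite,'n::finite) config \<Rightarrow> complex) \<Rightarrow> nat set
     \<Rightarrow> (('p,'n) config \<Rightarrow> complex) set" where
  "span_on \<phi> J = {g. \<exists>c. \<forall>R\<in>config_sphere. g R = (\<Sum>j\<in>J. c j * \<phi> j R)}"

definition L2inner :: "(('p::finite,'n::finite) config \<Rightarrow> complex) \<Rightarrow> (('p,'n) config \<Rightarrow> complex) \<Rightarrow> complex" where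
  "L2inner f g = integral\<^sup>L config_measure (\<lambda>R. f R * cnj (g R))"

definition L2norm :: "(('p::finite,'n::finite) config \<Rightarrow> complex) \<Rightarrow> real" where
  "L2norm f = sqrt (integral\<^sup>L config_measure (\<lambda>R. (cmod (f R))\<^sup>2))"

definition L2 :: "(('p::finite,'n::finite) config \<Rightarrow> complex) set" where
  "L2 = {f. f \<in> borel_measurable config_measure \<and>
            integrable config_measure (\<lambda>R. (cmod (f R))\<^sup>2)}"

text \<open>sym: L^2-orthogonal projection onto the rotation-invariant functions
(a representative h: invariant, in L^2, with g - h orthogonal to all
invariant L^2 functions).\<close>
definition sym :: "(('p::finite,'n::finite) config \<Rightarrow> complex) \<Rightarrow> (('p,'n) config \<Rightarrow> complex)" where
  "sym g = (SOME h. h \<in> L2 \<and> rot_invariant h \<and>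
              (\<forall>u\<in>L2. rot_invariant u \<longrightarrow> L2inner (\<lambda>R. g R - h R) u = 0))"

definition eps_sym :: "(('p::finite,'n::finite) config \<Rightarrow> complex) \<Rightarrow> real" where
  "eps_sym g = L2norm (\<lambda>R. g R - sym g R)"

definition is_haar_SO :: "(real^'n::finite^'n) measure \<Rightarrow> bool" where
  "is_haar_SO H \<longleftrightarrow> prob_space H \<and> sets H = sets borel \<and> emeasure H SO = 1 \<and>
     (\<forall>Q\<in>SO. distr H borel (\<lambda>M. Q ** M) = H)"

definition mat_mono :: "('n::finite \<Rightarrow> 'n \<Rightarrow> nat) \<Rightarrow> real^'n^'n \<Rightarrow> complex" where
  "mat_mono \<beta> Q = (\<Prod>i\<in>UNIV. \<Prod>j\<in>UNIV. complex_of_real ((Q $ i $ j) ^ \<beta> i j))"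

definition mat_deg :: "('n::finite \<Rightarrow> 'n \<Rightarrow> nat) \<Rightarrow> nat" where
  "mat_deg \<beta> = (\<Sum>i\<in>UNIV. \<Sum>j\<in>UNIV. \<beta> i j)"

definition quadrature_degree ::
  "(real^'n::finite^'n) measure \<Rightarrow> nat \<Rightarrow> (nat \<Rightarrow> real) \<Rightarrow> (nat \<Rightarrow> real^'n^'n) \<Rightarrow> nat \<Rightarrow> bool" where
  "quadrature_degree H T w Q n \<longleftrightarrow>
     (\<forall>t<T. Q t \<in> SO) \<and>
     (\<forall>E c. finite E \<longrightarrow> (\<forall>\<beta>\<in>E. mat_deg \<beta> \<le> n) \<longrightarrow>
        (\<Sum>t<T. complex_of_real (w t) * (\<Sum>\<beta>\<in>E. c \<beta> * mat_mono \<beta> (Q t)))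
          = integral\<^sup>L H (\<lambda>M. \<Sum>\<beta>\<in>E. c \<beta> * mat_mono \<beta> M))"

definition L_aug :: "(nat \<Rightarrow> ('p::finite,'n::finite) config \<Rightarrow> complex) \<Rightarrow> nat \<Rightarrow>
     (nat \<Rightarrow> ('p,'n) config) \<Rightarrow> nat \<Rightarrow> (nat \<Rightarrow> complex) \<Rightarrow>
     nat \<Rightarrow> (nat \<Rightarrow> real) \<Rightarrow> (nat \<Rightarrow> real^'n^'n) \<Rightarrow> (nat \<Rightarrow> complex) \<Rightarrow> real" where
  "L_aug \<phi> m Rs npts Y T w Q \<beta> =
     (1/2) * (\<Sum>t<T. w t * (\<Sum>i<npts.
        (cmod ((\<Sum>j<m. \<phi> j (rot_act (Q t) (Rs i)) * \<beta> j) - Y i))\<^sup>2))"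

end

theory Submission
  imports Defs
begin

definition gmono :: "('i::finite \<Rightarrow> nat) \<Rightarrow> ('i \<Rightarrow> real) \<Rightarrow> complex" where
  "gmono \<alpha> x = (\<Prod>i\<in>UNIV. complex_of_real (x i ^ \<alpha> i))"

definition gdeg :: "('i::finite \<Rightarrow> nat) \<Rightarrow> nat" where
  "gdeg \<alpha> = (\<Sum>i\<in>UNIV. \<alpha> i)"

definition gpoly :: "('x \<Rightarrow> 'i::finite \<Rightarrow> real) \<Rightarrow> nat \<Rightarrow> ('x \<Rightarrow> complex) \<Rightarrow> bool" where
  "gpoly crd n F \<longleftrightarrow> (\<exists>E c. finite E \<and> (\<forall>\<alpha>\<in>E. gdeg \<alpha> \<le> n) \<and>
      (\<forall>x. F x = (\<Sum>\<alpha>\<in>E. c \<alpha> * gmono \<alpha> (crd x))))"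

lemma gmono_add: "gmono (\<lambda>i. a i + b i) x = gmono a x * gmono b x"
  by (simp add: gmono_def power_add prod.distrib)

lemma gdeg_add: "gdeg (\<lambda>i. a i + b i) = gdeg a + gdeg b"
  by (simp add: gdeg_def sum.distrib)

lemma gpoly_mono: "gpoly crd n F \<Longrightarrow> n \<le> n' \<Longrightarrow> gpoly crd n' F"
  unfolding gpoly_def by (meson order_trans)

lemma gpoly_const: "gpoly crd n (\<lambda>x. c)"
proof -
  have "\<forall>x. c = (\<Sum>\<alpha>\<in>{\<lambda>_. 0}. (\<lambda>_. c) \<alpha> * gmono \<alpha> (crd x))"
    by (simp add: gmono_def)
  moreover have "gdeg (\<lambda>_. 0::nat) \<le> n" by (simp add: gdeg_def)
  ultimately show ?thesis unfolding gpoly_def by (intro exI[of _ "{\<lambda>_. 0}"] exI[of _ "\<lambda>_. c"]) auto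
qed

lemma gpoly_coord: "gpoly crd 1 (\<lambda>x. complex_of_real (crd x i))"
proof -
  define a where "a = (\<lambda>j. if j = i then 1 else (0::nat))"
  have "gmono a y = complex_of_real (y i)" for y
  proof -
    have "gmono a y = (\<Prod>j\<in>UNIV. if j = i then complex_of_real (y i) else 1)"
      unfolding gmono_def a_def by (intro prod.cong) auto
    also have "\<dots> = complex_of_real (y i)" by (subst prod.delta) auto
    finally show ?thesis .
  qed
  moreover have "gdeg a = 1" unfolding gdeg_def a_def by (subst sum.delta) auto
  ultimately show ?thesis unfolding gpoly_def
    by (intro exI[of _ "{a}"] exI[of _ "\<lambda>_. 1"]) auto
qed

lemma gpoly_add:
  assumes "gpoly crd n F" "gpoly crd n G" shows "gpoly crd n (\<lambda>x. F x + G x)"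
proof -
  obtain E1 c1 where 1: "finite E1" "\<forall>\<alpha>\<in>E1. gdeg \<alpha> \<le> n" "\<forall>x. F x = (\<Sum>\<alpha>\<in>E1. c1 \<alpha> * gmono \<alpha> (crd x))"
    using assms(1) unfolding gpoly_def by blast
  obtain E2 c2 where 2: "finite E2" "\<forall>\<alpha>\<in>E2. gdeg \<alpha> \<le> n" "\<forall>x. G x = (\<Sum>\<alpha>\<in>E2. c2 \<alpha> * gmono \<alpha> (crd x))"
    using assms(2) unfolding gpoly_def by blast
  define c where "c \<alpha> = (if \<alpha> \<in> E1 then c1 \<alpha> else 0) + (if \<alpha> \<in> E2 then c2 \<alpha> else 0)" for \<alpha>
  have "F x + G x = (\<Sum>\<alpha>\<in>E1 \<union> E2. c \<alpha> * gmono \<alpha> (crd x))" for x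
  proof -
    have r: "(\<Sum>\<alpha>\<in>E1 \<union> E2. (if \<alpha> \<in> B then c' \<alpha> else 0) * g \<alpha>) = (\<Sum>\<alpha>\<in>B. c' \<alpha> * g \<alpha>)"
      if "B \<subseteq> E1 \<union> E2" for B c' and g :: "_ \<Rightarrow> complex"
    proof -
      have "(\<Sum>\<alpha>\<in>E1 \<union> E2. (if \<alpha> \<in> B then c' \<alpha> else 0) * g \<alpha>) = (\<Sum>\<alpha>\<in>E1 \<union> E2. if \<alpha> \<in> B then c' \<alpha> * g \<alpha> else 0)"
        by (intro sum.cong) auto
      also have "\<dots> = (\<Sum>\<alpha>\<in>(E1 \<union> E2) \<inter> B. c' \<alpha> * g \<alpha>)"
        using 1(1) 2(1) by (simp add: sum.inter_restrict)
      finally show ?thesis using that by (simp add: Int_absorb1)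
    qed
    have a: "F x = (\<Sum>\<alpha>\<in>E1 \<union> E2. (if \<alpha> \<in> E1 then c1 \<alpha> else 0) * gmono \<alpha> (crd x))"
      using 1 r[of E1] by simp
    have b: "G x = (\<Sum>\<alpha>\<in>E1 \<union> E2. (if \<alpha> \<in> E2 then c2 \<alpha> else 0) * gmono \<alpha> (crd x))"
      using 2 r[of E2] by simp
    show ?thesis unfolding a b c_def by (simp add: distrib_right sum.distrib)
  qed
  then show ?thesis unfolding gpoly_def using 1 2
    by (intro exI[of _ "E1 \<union> E2"] exI[of _ c]) auto
qed

lemma gpoly_mult:
  assumes "gpoly crd n F" "gpoly crd k G" shows "gpoly crd (n + k) (\<lambda>x. F x * G x)"
proof -
  obtain E1 c1 where 1: "finite E1" "\<forall>\<alpha>\<in>E1. gdeg \<alpha> \<le> n" "\<forall>x. F x = (\<Sum>\<alpha>\<in>E1. c1 \<alpha> * gmono \<alpha> (crd x))"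
    using assms(1) unfolding gpoly_def by blast
  obtain E2 c2 where 2: "finite E2" "\<forall>\<alpha>\<in>E2. gdeg \<alpha> \<le> k" "\<forall>x. G x = (\<Sum>\<alpha>\<in>E2. c2 \<alpha> * gmono \<alpha> (crd x))"
    using assms(2) unfolding gpoly_def by blast
  define s where "s p = (\<lambda>i. fst p i + snd p i)" for p :: "('b \<Rightarrow> nat) \<times> ('b \<Rightarrow> nat)"
  define P where "P = E1 \<times> E2"
  define c where "c \<gamma> = (\<Sum>p\<in>{p\<in>P. s p = \<gamma>}. c1 (fst p) * c2 (snd p))" for \<gamma>
  have fP: "finite P" using 1 2 by (simp add: P_def)
  have "F x * G x = (\<Sum>\<gamma>\<in>s ` P. c \<gamma> * gmono \<gamma> (crd x))" for x
  proof -
    have "F x * G x = (\<Sum>p\<in>P. c1 (fst p) * c2 (snd p) * gmono (s p) (crd x))"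
      unfolding 1(3)[rule_format] 2(3)[rule_format] sum_product P_def s_def gmono_add
      by (simp add: sum.cartesian_product mult_ac case_prod_beta)
    also have "\<dots> = (\<Sum>\<gamma>\<in>s ` P. \<Sum>p\<in>{p\<in>P. s p = \<gamma>}. c1 (fst p) * c2 (snd p) * gmono (s p) (crd x))"
      by (rule sum.image_gen[OF fP])
    also have "\<dots> = (\<Sum>\<gamma>\<in>s ` P. c \<gamma> * gmono \<gamma> (crd x))"
      unfolding c_def sum_distrib_right by (intro sum.cong refl) auto
    finally show ?thesis .
  qed
  moreover have "\<forall>\<gamma>\<in>s ` P. gdeg \<gamma> \<le> n + k"
    using 1 2 by (auto simp: P_def s_def gdeg_add add_mono)
  ultimately show ?thesis unfolding gpoly_def using fP
    by (intro exI[of _ "s ` P"] exI[of _ c]) auto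
qed

lemma gpoly_sum:
  assumes "finite A" "\<And>a. a \<in> A \<Longrightarrow> gpoly crd n (F a)"
  shows "gpoly crd n (\<lambda>x. \<Sum>a\<in>A. F a x)"
  using assms by (induction A rule: finite_induct) (auto intro: gpoly_add gpoly_const)

lemma gpoly_prod:
  assumes "finite A" "\<And>a. a \<in> A \<Longrightarrow> gpoly crd (d a) (F a)"
  shows "gpoly crd (\<Sum>a\<in>A. d a) (\<lambda>x. \<Prod>a\<in>A. F a x)"
  using assms by (induction A rule: finite_induct) (auto intro: gpoly_mult gpoly_const)

lemma gpoly_power:
  assumes "gpoly crd n F" shows "gpoly crd (k * n) (\<lambda>x. F x ^ k)"
proof (induction k)
  case 0 then show ?case by (simp add: gpoly_const)
  case (Suc k) then show ?case using gpoly_mult[OF assms Suc] by simp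
qed

lemma gpoly_scale:
  assumes "gpoly crd n F" shows "gpoly crd n (\<lambda>x. a * F x)"
  using gpoly_mult[OF gpoly_const[of crd 0 a] assms] by simp

lemma gpoly_subst:
  fixes L :: "'x \<Rightarrow> 'y" and crd' :: "'y \<Rightarrow> 'j::finite \<Rightarrow> real"
  assumes "gpoly crd' n F"
    and "\<And>j. gpoly crd 1 (\<lambda>x. complex_of_real (crd' (L x) j))"
  shows "gpoly crd n (\<lambda>x. F (L x))"
proof -
  obtain E c where 1: "finite E" "\<forall>\<alpha>\<in>E. gdeg \<alpha> \<le> n" "\<forall>y. F y = (\<Sum>\<alpha>\<in>E. c \<alpha> * gmono \<alpha> (crd' y))"
    using assms(1) unfolding gpoly_def by blast
  have m: "gpoly crd n (\<lambda>x. gmono \<alpha> (crd' (L x)))" if "\<alpha> \<in> E" for \<alpha>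
  proof -
    have "gpoly crd (\<Sum>j\<in>UNIV. \<alpha> j * 1) (\<lambda>x. \<Prod>j\<in>UNIV. (complex_of_real (crd' (L x) j)) ^ \<alpha> j)"
      by (intro gpoly_prod gpoly_power assms(2)) auto
    then have "gpoly crd (gdeg \<alpha>) (\<lambda>x. gmono \<alpha> (crd' (L x)))"
      by (simp add: gmono_def gdeg_def)
    then show ?thesis using 1(2) that gpoly_mono by blast
  qed
  show ?thesis unfolding 1(3)[rule_format]
    by (intro gpoly_sum gpoly_scale m 1(1))
qed

definition matcrd :: "real^'n::finite^'n \<Rightarrow> 'n \<times> 'n \<Rightarrow> real" where
  "matcrd M = (\<lambda>(i,j). M $ i $ j)"

definition cfgcrd :: "('p::finite,'n::finite) config \<Rightarrow> 'p \<times> 'n \<Rightarrow> real" where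
  "cfgcrd R = (\<lambda>(p,i). R p $ i)"

abbreviation mtr :: "real^'n::finite^'n \<Rightarrow> real^'n^'n" where
  "mtr \<equiv> Finite_Cartesian_Product.transpose"

lemma mat_mono_gmono: "mat_mono \<beta> M = gmono (case_prod \<beta>) (matcrd M)"
  unfolding mat_mono_def gmono_def matcrd_def
  unfolding prod.cartesian_product UNIV_Times_UNIV by (intro prod.cong) auto

lemma mat_deg_gdeg: "mat_deg \<beta> = gdeg (case_prod \<beta>)"
  unfolding mat_deg_def gdeg_def
  unfolding sum.cartesian_product UNIV_Times_UNIV by (intro sum.cong) auto

lemma cmono_gmono: "cmono \<alpha> R = gmono (case_prod \<alpha>) (cfgcrd R)"
  unfolding cmono_def gmono_def cfgcrd_def
  unfolding prod.cartesian_product UNIV_Times_UNIV by (intro prod.cong) auto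

lemma cdeg_gdeg: "cdeg \<alpha> = gdeg (case_prod \<alpha>)"
  unfolding cdeg_def gdeg_def
  unfolding sum.cartesian_product UNIV_Times_UNIV by (intro sum.cong) auto

lemma case_prod_curry: "case_prod (curry \<gamma>) = \<gamma>" by auto

lemma gpoly_mat_repr:
  assumes "gpoly matcrd n F"
  shows "\<exists>E c. finite E \<and> (\<forall>\<beta>\<in>E. mat_deg \<beta> \<le> n) \<and> (\<forall>M. F M = (\<Sum>\<beta>\<in>E. c \<beta> * mat_mono \<beta> M))"
proof -
  obtain E c where 1: "finite E" "\<forall>\<alpha>\<in>E. gdeg \<alpha> \<le> n" "\<forall>x. F x = (\<Sum>\<alpha>\<in>E. c \<alpha> * gmono \<alpha> (matcrd x))"
    using assms unfolding gpoly_def by blast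
  have inj: "inj_on curry E" by (metis case_prod_curry inj_onI)
  have A: "F M = (\<Sum>\<beta>\<in>curry ` E. c (case_prod \<beta>) * mat_mono \<beta> M)" for M
  proof -
    have eq: "mat_mono (curry \<alpha>) M = gmono \<alpha> (matcrd M)" for \<alpha> by (simp only: mat_mono_gmono case_prod_curry)
    show ?thesis by (simp only: 1(3)[rule_format] sum.reindex[OF inj] o_def eq case_prod_curry)
  qed
  have B: "\<forall>\<beta>\<in>curry ` E. mat_deg \<beta> \<le> n"
  proof
    fix \<beta> assume "\<beta> \<in> curry ` E" then obtain \<alpha> where a: "\<beta> = curry \<alpha>" "\<alpha> \<in> E" by (rule imageE)
    have "gdeg \<alpha> \<le> n" using 1(2) a(2) by blast
    then show "mat_deg \<beta> \<le> n" unfolding a(1) mat_deg_gdeg case_prod_curry .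
  qed
  have fin: "finite (curry ` E)" using 1(1) by simp
  show ?thesis
    by (rule exI[of _ "curry ` E"], rule exI[of _ "\<lambda>\<beta>. c (case_prod \<beta>)"]) (use fin A B in auto)
qed

lemma gpoly_polyV:
  assumes "gpoly cfgcrd n F" "\<forall>R\<in>config_sphere. f R = F R"
  shows "f \<in> polyV n"
proof -
  obtain E c where 1: "finite E" "\<forall>\<alpha>\<in>E. gdeg \<alpha> \<le> n" "\<forall>x. F x = (\<Sum>\<alpha>\<in>E. c \<alpha> * gmono \<alpha> (cfgcrd x))"
    using assms unfolding gpoly_def by blast
  have inj: "inj_on curry E" by (metis case_prod_curry inj_onI)
  have A: "F R = (\<Sum>\<beta>\<in>curry ` E. c (case_prod \<beta>) * cmono \<beta> R)" for R
  proof -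
    have eq: "cmono (curry \<alpha>) R = gmono \<alpha> (cfgcrd R)" for \<alpha> by (simp only: cmono_gmono case_prod_curry)
    show ?thesis by (simp only: 1(3)[rule_format] sum.reindex[OF inj] o_def eq case_prod_curry)
  qed
  have B: "\<forall>\<beta>\<in>curry ` E. cdeg \<beta> \<le> n"
  proof
    fix \<beta> assume "\<beta> \<in> curry ` E" then obtain \<alpha> where a: "\<beta> = curry \<alpha>" "\<alpha> \<in> E" by (rule imageE)
    have "gdeg \<alpha> \<le> n" using 1(2) a(2) by blast
    then show "cdeg \<beta> \<le> n" unfolding a(1) cdeg_gdeg case_prod_curry .
  qed
  have fin: "finite (curry ` E)" using 1(1) by simp
  show ?thesis unfolding polyV_def
    by (rule CollectI, rule exI[of _ "curry ` E"], rule exI[of _ "\<lambda>\<beta>. c (case_prod \<beta>)"]) (use fin A B assms(2) in auto)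
qed

lemma polyV_gpoly:
  assumes "f \<in> polyV n"
  shows "\<exists>F. gpoly cfgcrd n F \<and> (\<forall>R\<in>config_sphere. f R = F R)"
proof -
  obtain E c where 1: "finite E" "\<forall>\<alpha>\<in>E. cdeg \<alpha> \<le> n" "\<forall>R\<in>config_sphere. f R = (\<Sum>\<alpha>\<in>E. c \<alpha> * cmono \<alpha> R)"
    using assms unfolding polyV_def by blast
  have inj: "inj_on case_prod E" by (metis curry_case_prod inj_onI)
  define F where "F R = (\<Sum>\<alpha>\<in>E. c \<alpha> * cmono \<alpha> R)" for R
  have A: "F R = (\<Sum>\<gamma>\<in>case_prod ` E. c (curry \<gamma>) * gmono \<gamma> (cfgcrd R))" for R
    unfolding sum.reindex[OF inj] F_def by (simp only: cmono_gmono o_def curry_case_prod)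
  have B: "\<forall>\<gamma>\<in>case_prod ` E. gdeg \<gamma> \<le> n"
  proof
    fix \<beta> assume "\<beta> \<in> case_prod ` E" then obtain \<alpha> where a: "\<beta> = case_prod \<alpha>" "\<alpha> \<in> E" by (rule imageE)
    have "cdeg \<alpha> \<le> n" using 1(2) a(2) by blast
    then show "gdeg \<beta> \<le> n" unfolding a(1) cdeg_gdeg .
  qed
  have fin: "finite (case_prod ` E)" using 1(1) by simp
  have "gpoly cfgcrd n F" unfolding gpoly_def
    by (rule exI[of _ "case_prod ` E"], rule exI[of _ "\<lambda>\<beta>. c (curry \<beta>)"]) (use fin A B in auto)
  then show ?thesis using 1(3) F_def by auto
qed

lemma gpoly_measurable:
  assumes "gpoly crd n F" "\<And>i. (\<lambda>x. crd x i) \<in> borel_measurable N"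
  shows "F \<in> borel_measurable N"
proof -
  obtain E c where 1: "finite E" "\<forall>x. F x = (\<Sum>\<alpha>\<in>E. c \<alpha> * gmono \<alpha> (crd x))"
    using assms unfolding gpoly_def by blast
  have "(\<lambda>x. \<Sum>\<alpha>\<in>E. c \<alpha> * gmono \<alpha> (crd x)) \<in> borel_measurable N"
    unfolding gmono_def using assms(2) by measurable
  moreover have "F = (\<lambda>x. \<Sum>\<alpha>\<in>E. c \<alpha> * gmono \<alpha> (crd x))" using 1 by auto
  ultimately show ?thesis by simp
qed

lemma matcrd_meas: "(\<lambda>M. matcrd M i) \<in> borel_measurable borel"
  unfolding matcrd_def by (cases i) (simp, intro borel_measurable_continuous_onI continuous_intros)

lemma gpoly_mat_right:
  assumes "gpoly matcrd n F" shows "gpoly matcrd n (\<lambda>M. F (M ** A))"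
proof (rule gpoly_subst[OF assms])
  fix ij :: "'a \<times> 'a" obtain i j where ij: "ij = (i,j)" by fastforce
  have "complex_of_real (matcrd (M ** A) ij) = (\<Sum>k\<in>UNIV. complex_of_real (A $ k $ j) * complex_of_real (matcrd M (i,k)))" for M
    by (simp add: ij matcrd_def matrix_matrix_mult_def mult.commute)
  moreover have "gpoly matcrd 1 (\<lambda>M. \<Sum>k\<in>UNIV. complex_of_real (A $ k $ j) * complex_of_real (matcrd M (i,k)))"
    by (intro gpoly_sum gpoly_scale gpoly_coord) auto
  ultimately show "gpoly matcrd 1 (\<lambda>M. complex_of_real (matcrd (M ** A) ij))" by simp
qed

lemma gpoly_mat_left:
  assumes "gpoly matcrd n F" shows "gpoly matcrd n (\<lambda>M. F (A ** M))"
proof (rule gpoly_subst[OF assms])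
  fix ij :: "'a \<times> 'a" obtain i j where ij: "ij = (i,j)" by fastforce
  have "complex_of_real (matcrd (A ** M) ij) = (\<Sum>k\<in>UNIV. complex_of_real (A $ i $ k) * complex_of_real (matcrd M (k,j)))" for M
    by (simp add: ij matcrd_def matrix_matrix_mult_def)
  moreover have "gpoly matcrd 1 (\<lambda>M. \<Sum>k\<in>UNIV. complex_of_real (A $ i $ k) * complex_of_real (matcrd M (k,j)))"
    by (intro gpoly_sum gpoly_scale gpoly_coord) auto
  ultimately show "gpoly matcrd 1 (\<lambda>M. complex_of_real (matcrd (A ** M) ij))" by simp
qed

lemma gpoly_mat_tr:
  assumes "gpoly matcrd n F" shows "gpoly matcrd n (\<lambda>M. F (mtr M))"
proof (rule gpoly_subst[OF assms])
  fix ij :: "'a \<times> 'a" obtain i j where ij: "ij = (i,j)" by fastforce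
  have "complex_of_real (matcrd (mtr M) ij) = complex_of_real (matcrd M (j,i))" for M
    by (simp add: ij matcrd_def transpose_def)
  then show "gpoly matcrd 1 (\<lambda>M. complex_of_real (matcrd (mtr M) ij))" using gpoly_coord by simp
qed

lemma gpoly_cfg_rot:
  assumes "gpoly cfgcrd n F" shows "gpoly matcrd n (\<lambda>M. F (rot_act M R))"
proof (rule gpoly_subst[OF assms])
  fix pi :: "'a \<times> 'b" obtain p i where pi: "pi = (p,i)" by fastforce
  have "complex_of_real (cfgcrd (rot_act M R) pi) = (\<Sum>k\<in>UNIV. complex_of_real (R p $ k) * complex_of_real (matcrd M (i,k)))" for M
    by (simp add: pi matcrd_def cfgcrd_def rot_act_def matrix_vector_mult_def mult.commute)
  moreover have "gpoly matcrd 1 (\<lambda>M. \<Sum>k\<in>UNIV. complex_of_real (R p $ k) * complex_of_real (matcrd M (i,k)))"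
    by (intro gpoly_sum gpoly_scale gpoly_coord) auto
  ultimately show "gpoly matcrd 1 (\<lambda>M. complex_of_real (cfgcrd (rot_act M R) pi))" by simp
qed

lemma gpoly_cfg_rot2:
  assumes "gpoly cfgcrd n F" shows "gpoly cfgcrd n (\<lambda>R. F (rot_act Q R))"
proof (rule gpoly_subst[OF assms])
  fix pi :: "'a \<times> 'b" obtain p i where pi: "pi = (p,i)" by fastforce
  have "complex_of_real (cfgcrd (rot_act Q R) pi) = (\<Sum>k\<in>UNIV. complex_of_real (Q $ i $ k) * complex_of_real (cfgcrd R (p,k)))" for R
    by (simp add: pi cfgcrd_def rot_act_def matrix_vector_mult_def)
  moreover have "gpoly cfgcrd 1 (\<lambda>R. \<Sum>k\<in>UNIV. complex_of_real (Q $ i $ k) * complex_of_real (cfgcrd R (p,k)))"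
    by (intro gpoly_sum gpoly_scale gpoly_coord) auto
  ultimately show "gpoly cfgcrd 1 (\<lambda>R. complex_of_real (cfgcrd (rot_act Q R) pi))" by simp
qed

lemma matmul_meas: "(\<lambda>M::real^'n::finite^'n. Q ** M) \<in> borel_measurable borel"
  unfolding matrix_matrix_mult_def
  by (intro borel_measurable_continuous_onI continuous_on_vec_lambda continuous_on_sum continuous_on_mult continuous_on_const continuous_on_component continuous_on_id)

lemma SO_tr: "Q \<in> SO \<Longrightarrow> mtr Q \<in> SO"
  by (simp add: SO_def orthogonal_matrix_transpose det_transpose)

lemma SO_mul: "Q \<in> SO \<Longrightarrow> Q' \<in> SO \<Longrightarrow> Q ** Q' \<in> SO"
  by (simp add: SO_def orthogonal_matrix_mul det_mul)

lemma SO_orth: "Q \<in> SO \<Longrightarrow> mtr Q ** Q = mat 1 \<and> Q ** mtr Q = mat 1"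
  by (simp add: SO_def orthogonal_matrix_def)

lemma quad_int:
  assumes "quadrature_degree H T w Q nd" "gpoly matcrd nd F"
  shows "(\<Sum>t<T. complex_of_real (w t) * F (Q t)) = integral\<^sup>L H F"
proof -
  obtain E c where 1: "finite E" "\<forall>\<beta>\<in>E. mat_deg \<beta> \<le> nd" "\<forall>M. F M = (\<Sum>\<beta>\<in>E. c \<beta> * mat_mono \<beta> M)"
    using gpoly_mat_repr[OF assms(2)] by blast
  have F: "F = (\<lambda>M. \<Sum>\<beta>\<in>E. c \<beta> * mat_mono \<beta> M)" using 1(3) by auto
  show ?thesis using assms(1) 1(1,2) unfolding quadrature_degree_def F by blast
qed

lemma left_inv:
  fixes F :: "real^'n::finite^'n \<Rightarrow> complex"
  assumes "is_haar_SO H" "Q \<in> SO" "F \<in> borel_measurable borel"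
  shows "integral\<^sup>L H (\<lambda>M. F (Q ** M)) = integral\<^sup>L H F"
proof -
  have d: "distr H borel (\<lambda>M. Q ** M) = H" using assms(1,2) unfolding is_haar_SO_def by blast
  have s: "sets H = sets borel" using assms(1) unfolding is_haar_SO_def by blast
  have m: "(\<lambda>M. Q ** M) \<in> H \<rightarrow>\<^sub>M borel"
    using matmul_meas measurable_cong_sets[OF s refl] by blast
  have "integral\<^sup>L H F = integral\<^sup>L (distr H borel (\<lambda>M. Q ** M)) F" using d by simp
  also have "\<dots> = integral\<^sup>L H (\<lambda>M. F (Q ** M))" by (rule integral_distr[OF m assms(3)])
  finally show ?thesis by simp
qed

lemma gpoly_mat_meas: "gpoly matcrd n F \<Longrightarrow> F \<in> borel_measurable borel"
  by (rule gpoly_measurable[OF _ matcrd_meas])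

context
  fixes H :: "(real^'n::finite^'n) measure" and T :: nat and w :: "nat \<Rightarrow> real" and Q :: "nat \<Rightarrow> real^'n^'n" and nd :: nat
  assumes haar: "is_haar_SO H" and quad: "quadrature_degree H T w Q nd" and wsum: "(\<Sum>t<T. w t) = 1"
begin

lemma QSO: "t < T \<Longrightarrow> Q t \<in> SO"
  using quad unfolding quadrature_degree_def by blast

lemma wsumc: "(\<Sum>t<T. complex_of_real (w t)) = 1"
  using wsum by (metis of_real_1 of_real_sum)

lemma I_eq_J:
  assumes F: "gpoly matcrd nd F"
  shows "(\<Sum>t<T. complex_of_real (w t) * F (Q t)) = (\<Sum>t<T. complex_of_real (w t) * F (mtr (Q t)))"
proof -
  define G where "G M = F (mtr M)" for M
  have G: "gpoly matcrd nd G" unfolding G_def by (rule gpoly_mat_tr[OF F])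
  have Fm: "F \<in> borel_measurable borel" by (rule gpoly_mat_meas[OF F])
  have Gm: "G \<in> borel_measurable borel" by (rule gpoly_mat_meas[OF G])
  have s1: "integral\<^sup>L H F = (\<Sum>t<T. complex_of_real (w t) * F (mtr (Q s) ** Q t))" if "s < T" for s
  proof -
    have "integral\<^sup>L H F = integral\<^sup>L H (\<lambda>M. F (mtr (Q s) ** M))"
      using left_inv[OF haar SO_tr[OF QSO[OF that]] Fm] by simp
    also have "\<dots> = (\<Sum>t<T. complex_of_real (w t) * F (mtr (Q s) ** Q t))"
      using quad_int[OF quad gpoly_mat_left[OF F]] by simp
    finally show ?thesis .
  qed
  have I: "(\<Sum>t<T. complex_of_real (w t) * F (Q t)) = integral\<^sup>L H F" by (rule quad_int[OF quad F])
  also have "\<dots> = (\<Sum>s<T. complex_of_real (w s) * integral\<^sup>L H F)"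
    by (simp add: sum_distrib_right[symmetric] wsumc)
  also have "\<dots> = (\<Sum>s<T. complex_of_real (w s) * (\<Sum>t<T. complex_of_real (w t) * F (mtr (Q s) ** Q t)))"
    by (intro sum.cong refl) (simp add: s1)
  also have "\<dots> = (\<Sum>t<T. complex_of_real (w t) * (\<Sum>s<T. complex_of_real (w s) * F (mtr (Q s) ** Q t)))"
  proof -
    have "(\<Sum>s<T. complex_of_real (w s) * (\<Sum>t<T. complex_of_real (w t) * F (mtr (Q s) ** Q t)))
       = (\<Sum>s<T. \<Sum>t<T. complex_of_real (w s) * (complex_of_real (w t) * F (mtr (Q s) ** Q t)))"
      by (simp only: sum_distrib_left)
    also have "\<dots> = (\<Sum>t<T. \<Sum>s<T. complex_of_real (w s) * (complex_of_real (w t) * F (mtr (Q s) ** Q t)))"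
      by (rule sum.swap)
    also have "\<dots> = (\<Sum>t<T. complex_of_real (w t) * (\<Sum>s<T. complex_of_real (w s) * F (mtr (Q s) ** Q t)))"
      by (simp only: sum_distrib_left mult.left_commute)
    finally show ?thesis .
  qed
  also have "\<dots> = (\<Sum>t<T. complex_of_real (w t) * (\<Sum>s<T. complex_of_real (w s) * F (mtr (Q s))))"
  proof (rule sum.cong[OF refl])
    fix t assume t: "t \<in> {..<T}"
    have "(\<Sum>s<T. complex_of_real (w s) * F (mtr (Q s) ** Q t)) = (\<Sum>s<T. complex_of_real (w s) * G (mtr (Q t) ** Q s))"
      by (simp add: G_def matrix_transpose_mul)
    also have "\<dots> = integral\<^sup>L H (\<lambda>M. G (mtr (Q t) ** M))"
      by (rule quad_int[OF quad gpoly_mat_left[OF G]])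
    also have "\<dots> = integral\<^sup>L H G"
      using left_inv[OF haar SO_tr[OF QSO] Gm] t by simp
    also have "\<dots> = (\<Sum>s<T. complex_of_real (w s) * G (Q s))"
      by (rule quad_int[OF quad G, symmetric])
    finally have "(\<Sum>s<T. complex_of_real (w s) * F (mtr (Q s) ** Q t)) = (\<Sum>s<T. complex_of_real (w s) * F (mtr (Q s)))"
      by (simp add: G_def)
    then show "complex_of_real (w t) * (\<Sum>s<T. complex_of_real (w s) * F (mtr (Q s) ** Q t)) = complex_of_real (w t) * (\<Sum>s<T. complex_of_real (w s) * F (mtr (Q s)))"
      by simp
  qed
  also have "\<dots> = (\<Sum>s<T. complex_of_real (w s) * F (mtr (Q s)))"
    by (simp add: sum_distrib_right[symmetric] wsumc)
  finally show ?thesis .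
qed

lemma right_inv:
  assumes F: "gpoly matcrd nd F" and Q': "Q' \<in> SO"
  shows "(\<Sum>t<T. complex_of_real (w t) * F (Q t ** Q')) = (\<Sum>t<T. complex_of_real (w t) * F (Q t))"
proof -
  define G where "G M = F (mtr M)" for M
  have G: "gpoly matcrd nd G" unfolding G_def by (rule gpoly_mat_tr[OF F])
  have Gm: "G \<in> borel_measurable borel" by (rule gpoly_mat_meas[OF G])
  have FQ: "gpoly matcrd nd (\<lambda>M. F (M ** Q'))" by (rule gpoly_mat_right[OF F])
  have "(\<Sum>t<T. complex_of_real (w t) * F (Q t ** Q')) = (\<Sum>t<T. complex_of_real (w t) * F (mtr (Q t) ** Q'))"
    using I_eq_J[OF FQ] .
  also have "\<dots> = (\<Sum>t<T. complex_of_real (w t) * G (mtr Q' ** Q t))"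
    by (simp add: G_def matrix_transpose_mul)
  also have "\<dots> = integral\<^sup>L H (\<lambda>M. G (mtr Q' ** M))"
    by (rule quad_int[OF quad gpoly_mat_left[OF G]])
  also have "\<dots> = integral\<^sup>L H G"
    using left_inv[OF haar SO_tr[OF Q'] Gm] by simp
  also have "\<dots> = (\<Sum>t<T. complex_of_real (w t) * G (Q t))"
    by (rule quad_int[OF quad G, symmetric])
  also have "\<dots> = (\<Sum>t<T. complex_of_real (w t) * F (Q t))"
    using I_eq_J[OF F] by (simp add: G_def)
  finally show ?thesis .
qed

end

lemma SO_norm: "Q \<in> SO \<Longrightarrow> norm (Q *v x) = norm x"
proof -
  assume "Q \<in> SO"
  then have "orthogonal_matrix Q" by (simp add: SO_def)
  then have "orthogonal_transformation (\<lambda>x. Q *v x)"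
    by (simp add: orthogonal_transformation_matrix matrix_vector_mul_linear matrix_of_matrix_vector_mul)
  then show ?thesis by (rule orthogonal_transformation_norm)
qed

lemma rot_sphere: "Q \<in> SO \<Longrightarrow> R \<in> config_sphere \<Longrightarrow> rot_act Q R \<in> config_sphere"
  by (simp add: config_sphere_def rot_act_def SO_norm)

lemma rot_rot: "rot_act A (rot_act B R) = rot_act (A ** B) R"
  by (simp add: rot_act_def matrix_vector_mul_assoc)

lemma rot_id: "rot_act (mat 1) R = R"
  by (simp add: rot_act_def)

lemma ball_pos: "emeasure lborel (ball (0::real^'n::finite) 1) \<noteq> 0"
proof -
  have "0 < unit_ball_vol (real CARD('n::finite))" by (rule unit_ball_vol_pos) simp
  then have "unit_ball_vol (real CARD('n::finite)) \<noteq> 0" by (rule not_sym[OF less_imp_neq])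
  then show ?thesis by (simp add: emeasure_ball)
qed

lemma sphere_prob: "prob_space (sphere_measure :: (real^'n::finite) measure)"
  unfolding sphere_measure_def
proof (intro prob_space.prob_space_distr prob_space_uniform_measure ball_pos)
  show "emeasure lborel (ball (0::real^'n) 1) \<noteq> \<infinity>" using emeasure_lborel_ball_finite[of "0::real^'n" 1] by simp
  show "(\<lambda>x::real^'n. x /\<^sub>R norm x) \<in> uniform_measure lborel (ball 0 1) \<rightarrow>\<^sub>M borel"
    by (simp add: measurable_cong_sets[OF sets_uniform_measure refl])
qed

lemma config_prob: "prob_space (config_measure :: ('p::finite,'n::finite) config measure)"
  unfolding config_measure_def by (intro prob_space_PiM sphere_prob)

lemma space_config: "space config_measure = UNIV"
  by (simp add: config_measure_def space_PiM sphere_measure_def)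

lemma sets_sphere_measure: "sets (sphere_measure :: (real^'n::finite) measure) = sets borel"
  by (simp add: sphere_measure_def)

lemma AE_sphere1: "AE x in (sphere_measure :: (real^'n::finite) measure). norm x = 1"
proof -
  have m: "(\<lambda>x::real^'n. x /\<^sub>R norm x) \<in> uniform_measure lborel (ball 0 1) \<rightarrow>\<^sub>M borel"
    by (simp add: measurable_cong_sets[OF sets_uniform_measure refl])
  have s: "{x \<in> space borel. norm (x::real^'n) = 1} \<in> sets borel" by measurable
  have "AE x in lborel. (x::real^'n) \<noteq> 0" by (rule AE_lborel_singleton)
  then have "AE x in lborel. x \<in> ball (0::real^'n) 1 \<longrightarrow> norm (x /\<^sub>R norm x) = 1" by eventually_elim simp
  then have "AE x in uniform_measure lborel (ball (0::real^'n) 1). norm (x /\<^sub>R norm x) = 1"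
    by (intro AE_uniform_measureI) auto
  then show ?thesis unfolding sphere_measure_def using AE_distr_iff[OF m s] by simp
qed

lemma AE_config_sphere: "AE R in config_measure. R \<in> (config_sphere :: ('p::finite,'n::finite) config set)"
proof -
  have "AE R in config_measure. norm ((R::('p,'n) config) p) = 1" for p
    unfolding config_measure_def by (rule AE_PiM_component[OF sphere_prob _ AE_sphere1]) auto
  then have "AE R in config_measure. \<forall>p\<in>UNIV. norm ((R::('p,'n) config) p) = 1"
    by (subst AE_finite_all) auto
  then show ?thesis by (simp add: config_sphere_def)
qed

lemma cfg_comp_meas: "(\<lambda>R. (R::('p::finite,'n::finite) config) p $ i) \<in> borel_measurable config_measure"
proof -
  have "(\<lambda>R. (R::('p,'n) config) p) \<in> config_measure \<rightarrow>\<^sub>M sphere_measure"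
    unfolding config_measure_def by (rule measurable_component_singleton) simp
  then have "(\<lambda>R. (R::('p,'n) config) p) \<in> config_measure \<rightarrow>\<^sub>M borel"
    using measurable_cong_sets[OF refl sets_sphere_measure] by blast
  from measurable_compose[OF this borel_measurable_nth] show ?thesis by simp
qed

lemma cfgcrd_meas: "(\<lambda>R. cfgcrd R ij) \<in> borel_measurable config_measure"
  unfolding cfgcrd_def by (cases ij) (simp add: cfg_comp_meas)

lemma sphere_sets: "config_sphere \<in> sets (config_measure :: ('p::finite,'n::finite) config measure)"
proof -
  have "(\<lambda>R. norm ((R::('p,'n) config) p)) \<in> borel_measurable config_measure" for p
  proof -
    have "(\<lambda>R. (R::('p,'n) config) p) \<in> config_measure \<rightarrow>\<^sub>M sphere_measure"
      unfolding config_measure_def by (rule measurable_component_singleton) simp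
    then have "(\<lambda>R. (R::('p,'n) config) p) \<in> config_measure \<rightarrow>\<^sub>M borel"
      using measurable_cong_sets[OF refl sets_sphere_measure] by blast
    then show ?thesis by measurable
  qed
  then have "{R \<in> space config_measure. \<forall>p\<in>UNIV. norm ((R::('p,'n) config) p) = 1} \<in> sets config_measure"
    by measurable
  then show ?thesis by (simp add: config_sphere_def space_config)
qed

lemma sq_bound: "(cmod (c * (a - b)))\<^sup>2 \<le> 2 * (cmod a)\<^sup>2 + 2 * (cmod b)\<^sup>2" if "cmod c \<le> 1" for a b c :: complex
proof -
  have "cmod (c * (a - b)) \<le> cmod (a - b)" using that
    by (simp add: norm_mult mult_left_le_one_le)
  also have "\<dots> \<le> cmod a + cmod b" by (rule norm_triangle_ineq4)
  finally have 1: "cmod (c * (a - b)) \<le> cmod a + cmod b" .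
  have "(cmod (c * (a - b)))\<^sup>2 \<le> (cmod a + cmod b)\<^sup>2"
    by (rule power_mono[OF 1]) simp
  also have "\<dots> \<le> 2 * (cmod a)\<^sup>2 + 2 * (cmod b)\<^sup>2"
    using sum_squares_ge_zero[of "cmod a - cmod b" 0] by (simp add: power2_eq_square algebra_simps)
  finally show ?thesis .
qed

lemma eps_sym_zero:
  fixes g g0 :: "('p::finite,'n::finite) config \<Rightarrow> complex"
  assumes g0L2: "g0 \<in> L2" and g0inv: "rot_invariant g0" and eq: "\<forall>R\<in>config_sphere. g R = g0 R"
  shows "eps_sym g = 0"
proof -
  let ?\<mu> = "config_measure :: ('p,'n) config measure"
  let ?S = "config_sphere :: ('p,'n) config set"
  have AE_eq: "AE R in ?\<mu>. g R = g0 R"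
    using AE_config_sphere by eventually_elim (use eq in auto)
  have ex: "\<exists>h. h \<in> L2 \<and> rot_invariant h \<and> (\<forall>u\<in>L2. rot_invariant u \<longrightarrow> L2inner (\<lambda>R. g R - h R) u = 0)"
  proof (intro exI[of _ g0] conjI ballI impI g0L2 g0inv)
    fix u :: "('p,'n) config \<Rightarrow> complex"
    have "AE R in ?\<mu>. (g R - g0 R) * cnj (u R) = 0" using AE_eq by eventually_elim simp
    then show "L2inner (\<lambda>R. g R - g0 R) u = 0" unfolding L2inner_def by (rule integral_eq_zero_AE)
  qed
  define h where "h = sym g"
  have hp: "h \<in> L2 \<and> rot_invariant h \<and> (\<forall>u\<in>L2. rot_invariant u \<longrightarrow> L2inner (\<lambda>R. g R - h R) u = 0)"
    unfolding h_def sym_def by (rule someI_ex[OF ex])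
  have g0m[measurable]: "g0 \<in> borel_measurable ?\<mu>" using g0L2 by (simp add: L2_def)
  have hm[measurable]: "h \<in> borel_measurable ?\<mu>" using hp by (simp add: L2_def)
  have Sm[measurable]: "?S \<in> sets ?\<mu>" by (rule sphere_sets)
  define u where "u R = indicator ?S R * (g0 R - h R)" for R
  have um: "u \<in> borel_measurable ?\<mu>" unfolding u_def by measurable
  have uL2: "u \<in> L2"
  proof -
    have i1: "integrable ?\<mu> (\<lambda>R. (cmod (g0 R))\<^sup>2)" using g0L2 by (simp add: L2_def)
    have i2: "integrable ?\<mu> (\<lambda>R. (cmod (h R))\<^sup>2)" using hp by (simp add: L2_def)
    have i3: "integrable ?\<mu> (\<lambda>R. 2 * (cmod (g0 R))\<^sup>2 + 2 * (cmod (h R))\<^sup>2)"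
      using i1 i2 by simp
    have "integrable ?\<mu> (\<lambda>R. (cmod (u R))\<^sup>2)"
    proof (rule Bochner_Integration.integrable_bound[OF i3])
      show "(\<lambda>R. (cmod (u R))\<^sup>2) \<in> borel_measurable ?\<mu>" using um by measurable
      show "AE R in ?\<mu>. norm ((cmod (u R))\<^sup>2) \<le> norm (2 * (cmod (g0 R))\<^sup>2 + 2 * (cmod (h R))\<^sup>2)"
      proof (rule AE_I2)
        fix R
        have "(cmod (u R))\<^sup>2 \<le> 2 * (cmod (g0 R))\<^sup>2 + 2 * (cmod (h R))\<^sup>2"
          unfolding u_def by (rule sq_bound) (simp add: indicator_def)
        then show "norm ((cmod (u R))\<^sup>2) \<le> norm (2 * (cmod (g0 R))\<^sup>2 + 2 * (cmod (h R))\<^sup>2)"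
          by simp
      qed
    qed
    then show ?thesis using um by (simp add: L2_def)
  qed
  have uinv: "rot_invariant u"
    unfolding rot_invariant_def
  proof (intro ballI)
    fix Q :: "real^'n^'n" and R assume Q: "Q \<in> SO" and R: "R \<in> ?S"
    have "rot_act Q R \<in> ?S" by (rule rot_sphere[OF Q R])
    then show "u (rot_act Q R) = u R"
      using Q R g0inv hp unfolding u_def rot_invariant_def by simp
  qed
  have L: "integral\<^sup>L ?\<mu> (\<lambda>R. (g R - h R) * cnj (u R)) = 0" using hp uL2 uinv unfolding L2inner_def by blast
  have FE: "(\<lambda>R. (g R - h R) * cnj (u R)) = (\<lambda>R. complex_of_real (indicator ?S R * (cmod (g0 R - h R))\<^sup>2))"
  proof
    fix R show "(g R - h R) * cnj (u R) = complex_of_real (indicator ?S R * (cmod (g0 R - h R))\<^sup>2)"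
    proof (cases "R \<in> ?S")
      case True
      have "(g0 R - h R) * cnj (g0 R - h R) = complex_of_real ((cmod (g0 R - h R))\<^sup>2)"
        by (metis complex_norm_square of_real_power)
      then show ?thesis using eq True by (simp add: u_def)
    next
      case False then show ?thesis by (simp add: u_def)
    qed
  qed
  have "integral\<^sup>L ?\<mu> (\<lambda>R. complex_of_real (indicator ?S R * (cmod (g0 R - h R))\<^sup>2)) = 0"
    using L by (simp only: FE)
  then have "complex_of_real (integral\<^sup>L ?\<mu> (\<lambda>R. indicator ?S R * (cmod (g0 R - h R))\<^sup>2)) = 0"
    by (simp only: integral_complex_of_real)
  then have I0: "integral\<^sup>L ?\<mu> (\<lambda>R. indicator ?S R * (cmod (g0 R - h R))\<^sup>2) = 0" by simp
  have Z: "integral\<^sup>L ?\<mu> (\<lambda>R. (cmod (g R - h R))\<^sup>2) = 0"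
  proof (cases "integrable ?\<mu> (\<lambda>R. (cmod (g R - h R))\<^sup>2)")
    case True
    then have m: "(\<lambda>R. (cmod (g R - h R))\<^sup>2) \<in> borel_measurable ?\<mu>" by auto
    have "integral\<^sup>L ?\<mu> (\<lambda>R. (cmod (g R - h R))\<^sup>2) = integral\<^sup>L ?\<mu> (\<lambda>R. indicator ?S R * (cmod (g0 R - h R))\<^sup>2)"
    proof (rule integral_cong_AE[OF m])
      show "(\<lambda>R. indicator ?S R * (cmod (g0 R - h R))\<^sup>2) \<in> borel_measurable ?\<mu>" by measurable
      show "AE R in ?\<mu>. (cmod (g R - h R))\<^sup>2 = indicator ?S R * (cmod (g0 R - h R))\<^sup>2"
        using AE_config_sphere by eventually_elim (use eq in auto)
    qed
    then show ?thesis using I0 by simp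
  next
    case False then show ?thesis by (rule not_integrable_integral_eq)
  qed
  show ?thesis unfolding eps_sym_def L2norm_def h_def[symmetric] using Z by simp
qed

lemma gpoly_bounded_sphere:
  assumes "gpoly cfgcrd n (F :: ('p::finite,'n::finite) config \<Rightarrow> complex)"
  shows "\<exists>C. \<forall>R\<in>config_sphere. cmod (F R) \<le> C"
proof -
  obtain E c where 1: "finite E" "\<forall>x. F x = (\<Sum>\<alpha>\<in>E. c \<alpha> * gmono \<alpha> (cfgcrd x))"
    using assms unfolding gpoly_def by blast
  have "cmod (F R) \<le> (\<Sum>\<alpha>\<in>E. cmod (c \<alpha>))" if R: "R \<in> config_sphere" for R
  proof -
    have mono: "cmod (gmono \<alpha> (cfgcrd R)) \<le> 1" for \<alpha>
    proof -
      have "cmod (gmono \<alpha> (cfgcrd R)) = (\<Prod>i\<in>UNIV. cmod (complex_of_real (cfgcrd R i ^ \<alpha> i)))"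
        unfolding gmono_def by (rule prod_norm[symmetric])
      also have "\<dots> \<le> 1"
      proof (rule prod_le_1)
        fix i :: "'p \<times> 'n" obtain p k where i: "i = (p,k)" by fastforce
        have "\<bar>R p $ k\<bar> \<le> norm (R p)" by (rule component_le_norm_cart)
        also have "\<dots> = 1" using R by (simp add: config_sphere_def)
        finally have "\<bar>R p $ k\<bar> \<le> 1" .
        then have "\<bar>R p $ k\<bar> ^ \<alpha> i \<le> 1" by (simp add: power_le_one)
        then show "0 \<le> cmod (complex_of_real (cfgcrd R i ^ \<alpha> i)) \<and> cmod (complex_of_real (cfgcrd R i ^ \<alpha> i)) \<le> 1"
          by (simp add: i cfgcrd_def norm_power)
      qed
      finally show ?thesis .
    qed
    have "cmod (F R) \<le> (\<Sum>\<alpha>\<in>E. cmod (c \<alpha> * gmono \<alpha> (cfgcrd R)))"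
      unfolding 1(2)[rule_format] by (rule norm_sum)
    also have "\<dots> \<le> (\<Sum>\<alpha>\<in>E. cmod (c \<alpha>))"
    proof (rule sum_mono)
      fix \<alpha> show "cmod (c \<alpha> * gmono \<alpha> (cfgcrd R)) \<le> cmod (c \<alpha>)"
        using mono[of \<alpha>] by (simp add: norm_mult mult_left_le)
    qed
    finally show ?thesis .
  qed
  then show ?thesis by blast
qed

lemma var_id:
  fixes w :: "nat \<Rightarrow> real" and u :: "nat \<Rightarrow> complex" and y :: complex
  assumes ws: "(\<Sum>t<T. w t) = 1"
  defines "a \<equiv> (\<Sum>t<T. complex_of_real (w t) * u t)"
  shows "(\<Sum>t<T. w t * (cmod (u t - y))\<^sup>2) = (cmod (a - y))\<^sup>2 + (\<Sum>t<T. w t * (cmod (u t - a))\<^sup>2)"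
proof -
  have pt: "(cmod (u t - y))\<^sup>2 = (cmod (u t - a))\<^sup>2 + (cmod (a - y))\<^sup>2
      + 2 * (Re (u t - a) * Re (a - y) + Im (u t - a) * Im (a - y))" for t
    unfolding cmod_power2 by (simp add: power2_eq_square algebra_simps)
  have z: "(\<Sum>t<T. complex_of_real (w t) * (u t - a)) = 0"
  proof -
    have "(\<Sum>t<T. complex_of_real (w t) * (u t - a)) = a - (\<Sum>t<T. complex_of_real (w t)) * a"
      by (simp add: a_def right_diff_distrib sum_subtractf sum_distrib_right)
    also have "(\<Sum>t<T. complex_of_real (w t)) = 1" using ws by (metis of_real_1 of_real_sum)
    finally show ?thesis by simp
  qed
  have zr: "(\<Sum>t<T. w t * Re (u t - a)) = 0"
    using arg_cong[OF z, of Re] by (simp add: Re_sum)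
  have zi: "(\<Sum>t<T. w t * Im (u t - a)) = 0"
    using arg_cong[OF z, of Im] by (simp add: Im_sum)
  have "(\<Sum>t<T. w t * (cmod (u t - y))\<^sup>2)
      = (\<Sum>t<T. w t * (cmod (u t - a))\<^sup>2) + (\<Sum>t<T. w t) * (cmod (a - y))\<^sup>2
        + 2 * ((\<Sum>t<T. w t * Re (u t - a)) * Re (a - y) + (\<Sum>t<T. w t * Im (u t - a)) * Im (a - y))"
  proof -
    have e: "w t * (cmod (u t - y))\<^sup>2 = w t * (cmod (u t - a))\<^sup>2 + w t * (cmod (a - y))\<^sup>2
      + 2 * ((w t * Re (u t - a)) * Re (a - y) + (w t * Im (u t - a)) * Im (a - y))" for t
      unfolding pt by (simp only: distrib_left mult.assoc mult.left_commute)
    show ?thesis unfolding e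
      by (simp only: sum.distrib sum_distrib_left[symmetric] sum_distrib_right[symmetric])
  qed
  also have "\<dots> = (cmod (a - y))\<^sup>2 + (\<Sum>t<T. w t * (cmod (u t - a))\<^sup>2)"
    using ws zr zi by simp
  finally show ?thesis .
qed

lemma gpoly_diff: "gpoly crd n F \<Longrightarrow> gpoly crd n G \<Longrightarrow> gpoly crd n (\<lambda>x. F x - G x)"
  using gpoly_add[of crd n F "\<lambda>x. (-1) * G x"] gpoly_scale[of crd n G "-1"] by simp

theorem mainTheorem6:
  fixes \<phi> :: "nat \<Rightarrow> ('p::finite,'n::finite) config \<Rightarrow> complex"
    and K m mI npts T nd :: nat
    and Rs :: "nat \<Rightarrow> ('p,'n) config"
    and f :: "('p,'n) config \<Rightarrow> complex"
    and w :: "nat \<Rightarrow> real"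
    and Q :: "nat \<Rightarrow> real^'n^'n"
    and H :: "(real^'n^'n) measure"
    and \<beta> :: "nat \<Rightarrow> complex"
  assumes basis_V: "\<forall>j<m. \<phi> j \<in> polyV K" "span_on \<phi> {..<m} = polyV K"
    and orthonormal: "\<forall>j<m. \<forall>k<m. L2inner (\<phi> j) (\<phi> k) = (if j = k then 1 else 0)"
    and basis_B: "mI \<le> m" "span_on \<phi> {..<mI} = polyB K"
    and points: "\<forall>i<npts. Rs i \<in> config_sphere"
    and target: "rot_invariant f"
    and full_rank: "\<forall>c. (\<forall>i<npts. (\<Sum>j<m. \<phi> j (Rs i) * c j) = 0) \<longrightarrow> (\<forall>j<m. c j = 0)"
    and haar: "is_haar_SO H"
    and weights: "\<forall>t<T. w t > 0" "(\<Sum>t<T. w t) = 1"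
    and quad: "quadrature_degree H T w Q nd" "nd \<ge> K"
    and minimiser: "\<forall>\<gamma>. L_aug \<phi> m Rs npts (\<lambda>i. f (Rs i)) T w Q \<beta>
                          \<le> L_aug \<phi> m Rs npts (\<lambda>i. f (Rs i)) T w Q \<gamma>"
  shows "eps_sym (\<lambda>R. \<Sum>j<m. \<beta> j * \<phi> j R) = 0"
proof -
  let ?S = "config_sphere :: ('p,'n) config set"
  define PA where "PA = (\<lambda>R. \<Sum>j<m. \<beta> j * \<phi> j R)"
  have "PA \<in> span_on \<phi> {..<m}" unfolding span_on_def PA_def by blast
  then have PA_V: "PA \<in> polyV K" using basis_V(2) by simp
  obtain F where F: "gpoly cfgcrd K F" "\<forall>R\<in>?S. PA R = F R" using polyV_gpoly[OF PA_V] by blast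
  define a where "a = (\<lambda>R. \<Sum>t<T. complex_of_real (w t) * F (rot_act (Q t) R))"
  have Ta: "gpoly cfgcrd K a" unfolding a_def
    by (intro gpoly_sum gpoly_scale gpoly_cfg_rot2 F(1)) simp
  have QSO: "\<And>t. t < T \<Longrightarrow> Q t \<in> SO" using quad(1) unfolding quadrature_degree_def by blast
  have a_inv: "a (rot_act Q' R) = a R" if Q': "Q' \<in> SO" for Q' R
  proof -
    have P: "gpoly matcrd nd (\<lambda>M. F (rot_act M R))"
      using gpoly_mono[OF gpoly_cfg_rot[OF F(1)] quad(2)] .
    have "a (rot_act Q' R) = (\<Sum>t<T. complex_of_real (w t) * F (rot_act (Q t ** Q') R))"
      unfolding a_def by (simp add: rot_rot)
    also have "\<dots> = a R"
      unfolding a_def using right_inv[OF haar quad(1) weights(2) P Q'] .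
    finally show ?thesis .
  qed
  have aV: "a \<in> polyV K" by (rule gpoly_polyV[OF Ta]) simp
  then obtain \<gamma> where \<gamma>: "\<forall>R\<in>?S. a R = (\<Sum>j<m. \<gamma> j * \<phi> j R)"
    using basis_V(2) unfolding span_on_def by blast
  define Y where "Y = (\<lambda>i. f (Rs i))"
  define u where "u t i = F (rot_act (Q t) (Rs i))" for t i
  define ab where "ab i = a (Rs i)" for i
  have ab_eq: "ab i = (\<Sum>t<T. complex_of_real (w t) * u t i)" for i
    unfolding ab_def a_def u_def by simp
  have XS: "rot_act (Q t) (Rs i) \<in> ?S" if "t < T" "i < npts" for t i
    using rot_sphere[OF QSO[OF that(1)]] points that(2) by blast
  have Lb: "L_aug \<phi> m Rs npts Y T w Q \<beta> = 1/2 * (\<Sum>t<T. w t * (\<Sum>i<npts. (cmod (u t i - Y i))\<^sup>2))"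
    unfolding L_aug_def
  proof (intro arg_cong2[where f="(*)"] sum.cong refl)
    fix t i assume t: "t \<in> {..<T}" and i: "i \<in> {..<npts}"
    have "(\<Sum>j<m. \<phi> j (rot_act (Q t) (Rs i)) * \<beta> j) = PA (rot_act (Q t) (Rs i))"
      unfolding PA_def by (simp add: mult.commute)
    also have "\<dots> = u t i" unfolding u_def using F(2) XS t i by simp
    finally show "(cmod ((\<Sum>j<m. \<phi> j (rot_act (Q t) (Rs i)) * \<beta> j) - Y i))\<^sup>2 = (cmod (u t i - Y i))\<^sup>2"
      by simp
  qed
  have Lg: "L_aug \<phi> m Rs npts Y T w Q \<gamma> = 1/2 * (\<Sum>t<T. w t * (\<Sum>i<npts. (cmod (ab i - Y i))\<^sup>2))"
    unfolding L_aug_def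
  proof (intro arg_cong2[where f="(*)"] sum.cong refl)
    fix t i assume t: "t \<in> {..<T}" and i: "i \<in> {..<npts}"
    have "(\<Sum>j<m. \<phi> j (rot_act (Q t) (Rs i)) * \<gamma> j) = a (rot_act (Q t) (Rs i))"
      using \<gamma> XS t i by (simp add: mult.commute)
    also have "\<dots> = ab i" unfolding ab_def using a_inv QSO t by simp
    finally show "(cmod ((\<Sum>j<m. \<phi> j (rot_act (Q t) (Rs i)) * \<gamma> j) - Y i))\<^sup>2 = (cmod (ab i - Y i))\<^sup>2"
      by simp
  qed
  have swap: "(\<Sum>t<T. w t * (\<Sum>i<npts. h t i)) = (\<Sum>i<npts. \<Sum>t<T. w t * h t i)" for h :: "nat \<Rightarrow> nat \<Rightarrow> real"
  proof -
    have "(\<Sum>t<T. w t * (\<Sum>i<npts. h t i)) = (\<Sum>t<T. \<Sum>i<npts. w t * h t i)"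
      by (simp only: sum_distrib_left)
    also have "\<dots> = (\<Sum>i<npts. \<Sum>t<T. w t * h t i)" by (rule sum.swap)
    finally show ?thesis .
  qed
  have Lb2: "L_aug \<phi> m Rs npts Y T w Q \<beta> = 1/2 * (\<Sum>i<npts. (cmod (ab i - Y i))\<^sup>2 + (\<Sum>t<T. w t * (cmod (u t i - ab i))\<^sup>2))"
  proof -
    have vi: "(\<Sum>t<T. w t * (cmod (u t i - Y i))\<^sup>2) = (cmod (ab i - Y i))\<^sup>2 + (\<Sum>t<T. w t * (cmod (u t i - ab i))\<^sup>2)" for i
      unfolding ab_eq by (rule var_id[OF weights(2)])
    show ?thesis unfolding Lb swap vi ..
  qed
  have Lg2: "L_aug \<phi> m Rs npts Y T w Q \<gamma> = 1/2 * (\<Sum>i<npts. (cmod (ab i - Y i))\<^sup>2)"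
    unfolding Lg swap by (simp add: sum_distrib_right[symmetric] weights(2))
  have "L_aug \<phi> m Rs npts Y T w Q \<beta> \<le> L_aug \<phi> m Rs npts Y T w Q \<gamma>"
    using minimiser unfolding Y_def by blast
  then have D: "(\<Sum>i<npts. \<Sum>t<T. w t * (cmod (u t i - ab i))\<^sup>2) \<le> 0"
    unfolding Lb2 Lg2 by (simp add: sum.distrib)
  have nn: "0 \<le> w t * (cmod (u t i - ab i))\<^sup>2" if "t < T" for t i
    using weights(1) that by (intro mult_nonneg_nonneg) (auto simp: less_imp_le)
  have uz: "u t i = ab i" if t: "t < T" and i: "i < npts" for t i
  proof -
    have "(\<Sum>i<npts. \<Sum>t<T. w t * (cmod (u t i - ab i))\<^sup>2) = 0"
      using D nn by (intro antisym D sum_nonneg) auto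
    then have "\<forall>i\<in>{..<npts}. (\<Sum>t<T. w t * (cmod (u t i - ab i))\<^sup>2) = 0"
      by (subst (asm) sum_nonneg_eq_0_iff) (auto intro!: sum_nonneg nn)
    then have "(\<Sum>t<T. w t * (cmod (u t i - ab i))\<^sup>2) = 0" using i by blast
    then have "\<forall>t\<in>{..<T}. w t * (cmod (u t i - ab i))\<^sup>2 = 0"
      by (subst (asm) sum_nonneg_eq_0_iff) (auto intro!: nn)
    then have "w t * (cmod (u t i - ab i))\<^sup>2 = 0" using t by blast
    moreover have "w t \<noteq> 0" using weights(1) t by (metis less_irrefl)
    ultimately show ?thesis by simp
  qed
  have T0: "0 < T" using weights(2) by (cases T) auto
  define e0 where "e0 = (\<lambda>R. F (rot_act (Q 0) R) - a (rot_act (Q 0) R))"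
  have e0P: "gpoly cfgcrd K e0" unfolding e0_def
    by (intro gpoly_diff gpoly_cfg_rot2 F(1) Ta)
  have "e0 \<in> polyV K" by (rule gpoly_polyV[OF e0P]) simp
  then obtain c where c: "\<forall>R\<in>?S. e0 R = (\<Sum>j<m. c j * \<phi> j R)"
    using basis_V(2) unfolding span_on_def by blast
  have "\<forall>i<npts. (\<Sum>j<m. \<phi> j (Rs i) * c j) = 0"
  proof (intro allI impI)
    fix i assume i: "i < npts"
    have "e0 (Rs i) = u 0 i - ab i"
      unfolding e0_def u_def ab_def using a_inv[OF QSO[OF T0]] by simp
    also have "\<dots> = 0" using uz[OF T0 i] by simp
    finally show "(\<Sum>j<m. \<phi> j (Rs i) * c j) = 0" using c points i by (simp add: mult.commute)
  qed
  then have c0: "\<forall>j<m. c j = 0" using full_rank by blast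
  have PAa: "\<forall>R\<in>?S. PA R = a R"
  proof
    fix R assume R: "R \<in> ?S"
    define R' where "R' = rot_act (mtr (Q 0)) R"
    have R'S: "R' \<in> ?S" unfolding R'_def by (rule rot_sphere[OF SO_tr[OF QSO[OF T0]] R])
    have RR: "rot_act (Q 0) R' = R"
      unfolding R'_def rot_rot using SO_orth[OF QSO[OF T0]] by (simp add: rot_id)
    have "e0 R' = 0" using c c0 R'S by simp
    then have "F R = a R" unfolding e0_def RR by simp
    then show "PA R = a R" using F(2) R by simp
  qed
  define g0 where "g0 = (\<lambda>R. indicator ?S R * a R)"
  have am: "a \<in> borel_measurable config_measure" by (rule gpoly_measurable[OF Ta cfgcrd_meas])
  have Sm: "?S \<in> sets config_measure" by (rule sphere_sets)
  have g0m: "g0 \<in> borel_measurable config_measure"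
    unfolding g0_def using am Sm by measurable
  obtain C where C: "\<forall>R\<in>?S. cmod (a R) \<le> C" using gpoly_bounded_sphere[OF Ta] by blast
  have g0L2: "g0 \<in> L2"
  proof -
    have "integrable config_measure (\<lambda>R. (cmod (g0 R))\<^sup>2)"
    proof (rule finite_measure.integrable_const_bound[OF prob_space.finite_measure[OF config_prob]])
      show "(\<lambda>R. (cmod (g0 R))\<^sup>2) \<in> borel_measurable config_measure" using g0m by measurable
      show "AE R in config_measure. norm ((cmod (g0 R))\<^sup>2) \<le> C\<^sup>2"
      proof (rule AE_I2)
        fix R
        show "norm ((cmod (g0 R))\<^sup>2) \<le> C\<^sup>2"
        proof (cases "R \<in> ?S")
          case True
          then have "cmod (a R) \<le> C" using C by blast
          then have "(cmod (a R))\<^sup>2 \<le> C\<^sup>2" by (rule power_mono) simp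
          then show ?thesis using True by (simp add: g0_def)
        next
          case False then show ?thesis by (simp add: g0_def)
        qed
      qed
    qed
    then show ?thesis using g0m by (simp add: L2_def)
  qed
  have g0inv: "rot_invariant g0"
    unfolding rot_invariant_def
  proof (intro ballI)
    fix Q' :: "real^'n^'n" and R assume Q': "Q' \<in> SO" and R: "R \<in> ?S"
    have "rot_act Q' R \<in> ?S" by (rule rot_sphere[OF Q' R])
    then show "g0 (rot_act Q' R) = g0 R" using R a_inv[OF Q'] by (simp add: g0_def)
  qed
  have "\<forall>R\<in>?S. PA R = g0 R" using PAa by (simp add: g0_def)
  then have "eps_sym PA = 0" by (rule eps_sym_zero[OF g0L2 g0inv])
  then show ?thesis unfolding PA_def .
qed


end
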